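(* Let $\mathcal{M}_{\mathbb{P}}=(\mathcal{M},\mathbb{P})$ be an uncertain parametric MDP, $\varphi$ a specification with comparison operator $\le$, threshold $\lambda$ and associated solution function $\mathrm{sol}_{\mathcal{M}}$, and $\mathcal{U}_N$ a set of $N\ge1$ parameter instantiations sampled independently from $\mathbb{P}$. Let $\mathcal{U}_{N_\varphi}=\{u\in\mathcal{U}_N:\mathrm{sol}_{\mathcal{M}}(u)\le\lambda\}$ be the satisfying samples, $N_{\neg\varphi}=N-|\mathcal{U}_{N_\varphi}|$ the number of violating samples, and $\tau^+=\max_{u\in\mathcal{U}_{N_\varphi}}\mathrm{sol}_{\mathcal{M}}(u)$. Fix a confidence probability $\beta\in(0,1)$. Define $t^*(N)=0$, and for $k=0,\dots,N-1$ let $t^*(k)$ be the solution $t$ of \[\frac{1-\beta}{N}=\sum_{i=0}^{k}\binom{N}{i}(1-t)^i t^{N-i}.\] Then \[\mathbb{P}^N\Big\{\Pr\{u\in\mathcal{V}_{\mathcal{M}}\mid \mathrm{sol}_{\mathcal{M}}(u)\le\tau^+\}\ \ge\ t^*(N_{\neg\varphi})\Big\}\ \ge\ \beta,\] where the inner probability is with respect to $u$ drawn from $\mathbb{P}$.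
   Context: A parametric MDP is $\mathcal{M}=(S,\mathit{Act},s_I,V,\mathcal{P})$ with finite states and actions, initial state, finite parameter set $V$ and transition function $\mathcal{P}:S\times\mathit{Act}\times S\to\mathbb{Q}[V]$. Instantiations $u:V\to\mathbb{R}$ form the parameter space $\mathcal{V}_{\mathcal{M}}$; $\mathcal{M}[u]$ is the instantiated MDP, assumed well-defined and graph-preserving. An uncertain pMDP is $(\mathcal{M},\mathbb{P})$ with $\mathbb{P}$ a probability distribution on $\mathcal{V}_{\mathcal{M}}$. A specification $\varphi$ with operator $\le$ consists of a measure on MDPs (e.g. maximal reachability probability, expected reward) and a threshold $\lambda$; the solution function $\mathrm{sol}_{\mathcal{M}}:\mathcal{V}_{\mathcal{M}}\to\mathbb{R}$ maps $u$ to the value of the measure on $\mathcal{M}[u]$ (assumed measurable), and $\mathcal{M}[u]\models\varphi$ iff $\mathrm{sol}_{\mathcal{M}}(u)\le\lambda$. $\mathbb{P}^N$ is the $N$-fold product measure governing $\mathcal{U}_N$. (When $N_{\neg\varphi}=N$ the set $\mathcal{U}_{N_\varphi}$ is empty and the bound $t^*(N)=0$ holds trivially.) *)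

theory Defs
  imports "HOL-Probability.Probability"
begin

definition tstar :: "nat \<Rightarrow> real \<Rightarrow> nat \<Rightarrow> real" where
  "tstar N \<beta> k =
     (if k \<ge> N then 0
      else (THE t. 0 \<le> t \<and> t \<le> 1 \<and>
              (1 - \<beta>) / real N = (\<Sum>i\<le>k. real (N choose i) * (1 - t) ^ i * t ^ (N - i))))"

definition sat_idx :: "('u \<Rightarrow> real) \<Rightarrow> real \<Rightarrow> nat \<Rightarrow> (nat \<Rightarrow> 'u) \<Rightarrow> nat set" where
  "sat_idx sol lam N \<omega> = {i. i < N \<and> sol (\<omega> i) \<le> lam}"

definition num_viol :: "('u \<Rightarrow> real) \<Rightarrow> real \<Rightarrow> nat \<Rightarrow> (nat \<Rightarrow> 'u) \<Rightarrow> nat" where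
  "num_viol sol lam N \<omega> = N - card (sat_idx sol lam N \<omega>)"

text \<open>tau+ = max of sol over the satisfying samples (arbitrary if there are none).\<close>
definition tau_plus :: "('u \<Rightarrow> real) \<Rightarrow> real \<Rightarrow> nat \<Rightarrow> (nat \<Rightarrow> 'u) \<Rightarrow> real" where
  "tau_plus sol lam N \<omega> = Max ((\<lambda>i. sol (\<omega> i)) ` sat_idx sol lam N \<omega>)"

end

theory Submission
  imports Defs
begin

definition Phi :: "nat \<Rightarrow> nat \<Rightarrow> real \<Rightarrow> real" where
  "Phi n k t = (\<Sum>i\<le>k. real (n choose i) * (1 - t) ^ i * t ^ (n - i))"

lemma Phi_0: "Phi 0 k t = 1"
  unfolding Phi_def by (induction k) auto

lemma Phi_Suc_0: "Phi (Suc n) 0 t = t * Phi n 0 t"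
  unfolding Phi_def by simp

lemma Phi_Suc_Suc: "Phi (Suc n) (Suc k) t = (1 - t) * Phi n k t + t * Phi n (Suc k) t"
proof -
  let ?s = "1 - t"
  have "Phi (Suc n) (Suc k) t = t ^ Suc n + (\<Sum>j\<le>k. real (Suc n choose Suc j) * ?s ^ Suc j * t ^ (n - j))"
    unfolding Phi_def by (subst sum.atMost_Suc_shift) simp
  also have "\<dots> = t ^ Suc n + (\<Sum>j\<le>k. real (n choose j) * ?s ^ Suc j * t ^ (n - j))
       + (\<Sum>j\<le>k. real (n choose Suc j) * ?s ^ Suc j * t ^ (n - j))"
  proof -
    have "(\<Sum>j\<le>k. real (Suc n choose Suc j) * ?s ^ Suc j * t ^ (n - j)) =
      (\<Sum>j\<le>k. real (n choose j) * ?s ^ Suc j * t ^ (n - j) + real (n choose Suc j) * ?s ^ Suc j * t ^ (n - j))"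
      by (intro sum.cong) (simp_all add: algebra_simps)
    then show ?thesis by (simp add: sum.distrib)
  qed
  also have "(\<Sum>j\<le>k. real (n choose j) * ?s ^ Suc j * t ^ (n - j)) = ?s * Phi n k t"
    unfolding Phi_def by (simp add: sum_distrib_left algebra_simps)
  also have "(\<Sum>j\<le>k. real (n choose Suc j) * ?s ^ Suc j * t ^ (n - j))
      = (\<Sum>j\<le>k. t * (real (n choose Suc j) * ?s ^ Suc j * t ^ (n - Suc j)))"
  proof (rule sum.cong)
    fix j assume "j \<in> {..k}"
    show "real (n choose Suc j) * ?s ^ Suc j * t ^ (n - j) = t * (real (n choose Suc j) * ?s ^ Suc j * t ^ (n - Suc j))"
    proof (cases "Suc j \<le> n")
      case True
      then have "n - j = Suc (n - Suc j)" by simp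
      then show ?thesis by simp
    next
      case False
      then show ?thesis by simp
    qed
  qed simp
  also have "t ^ Suc n + ?s * Phi n k t + (\<Sum>j\<le>k. t * (real (n choose Suc j) * ?s ^ Suc j * t ^ (n - Suc j)))
      = ?s * Phi n k t + t * Phi n (Suc k) t"
    unfolding Phi_def by (simp only: sum.atMost_Suc_shift) (simp add: sum_distrib_left algebra_simps)
  finally show ?thesis .
qed

lemma Phi_le_Suc: "0 \<le> t \<Longrightarrow> t \<le> 1 \<Longrightarrow> Phi n k t \<le> Phi n (Suc k) t"
  unfolding Phi_def by simp

lemma Phi_nonneg: "0 \<le> t \<Longrightarrow> t \<le> 1 \<Longrightarrow> 0 \<le> Phi n k t"
  unfolding Phi_def by (intro sum_nonneg) simp

lemma Phi_mono: "0 \<le> t \<Longrightarrow> t \<le> t' \<Longrightarrow> t' \<le> 1 \<Longrightarrow> Phi n k t \<le> Phi n k t'"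
proof (induction n arbitrary: k)
  case 0
  then show ?case by (simp add: Phi_0)
next
  case (Suc n)
  show ?case
  proof (cases k)
    case 0
    then show ?thesis using Suc.prems power_mono[of t t' "Suc n"] unfolding Phi_def by simp
  next
    case (Suc k')
    let ?a = "Phi n k' t" and ?a' = "Phi n k' t'" and ?b = "Phi n (Suc k') t" and ?b' = "Phi n (Suc k') t'"
    have h1: "?a \<le> ?a'" "?b \<le> ?b'" using Suc.IH Suc.prems by auto
    have h2: "?a' \<le> ?b'" using Phi_le_Suc Suc.prems by simp
    have "(t' - t) * (?b' - ?a') \<ge> 0" "(1 - t) * (?a' - ?a) \<ge> 0" "t * (?b' - ?b) \<ge> 0"
      using h1 h2 Suc.prems by auto
    then show ?thesis using Suc by (simp add: Phi_Suc_Suc algebra_simps)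
  qed
qed

lemma Phi_strict_mono: "k < n \<Longrightarrow> 0 \<le> t \<Longrightarrow> t < t' \<Longrightarrow> t' \<le> 1 \<Longrightarrow> Phi n k t < Phi n k t'"
proof (induction n arbitrary: k)
  case 0
  then show ?case by simp
next
  case (Suc n)
  show ?case
  proof (cases k)
    case 0
    then show ?thesis using Suc.prems power_strict_mono[of t t' "Suc n"] unfolding Phi_def by simp
  next
    case (Suc k')
    let ?a = "Phi n k' t" and ?a' = "Phi n k' t'" and ?b = "Phi n (Suc k') t" and ?b' = "Phi n (Suc k') t'"
    have h1: "?a < ?a'" using Suc.IH Suc.prems Suc by auto
    have h1': "?b \<le> ?b'" using Phi_mono Suc.prems by auto
    have h2: "?a' \<le> ?b'" using Phi_le_Suc Suc.prems by simp
    have "(t' - t) * (?b' - ?a') \<ge> 0" "(1 - t) * (?a' - ?a) > 0" "t * (?b' - ?b) \<ge> 0"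
      using h1 h1' h2 Suc.prems by auto
    then show ?thesis using Suc by (simp add: Phi_Suc_Suc algebra_simps)
  qed
qed

lemma Phi_at_0: "k < n \<Longrightarrow> Phi n k 0 = 0"
  unfolding Phi_def by (intro sum.neutral) auto

lemma Phi_at_1: "Phi n k 1 = 1"
  unfolding Phi_def by (induction k) simp_all

lemma continuous_Phi: "continuous_on S (Phi n k)"
  unfolding Phi_def by (intro continuous_intros)

lemma tstar_props:
  assumes "k < N" "0 < \<beta>" "\<beta> < 1"
  shows "0 \<le> tstar N \<beta> k \<and> tstar N \<beta> k \<le> 1 \<and> Phi N k (tstar N \<beta> k) = (1 - \<beta>) / real N"
proof -
  let ?y = "(1 - \<beta>) / real N"
  have N: "real N \<ge> 1" using assms by simp
  have y0: "0 \<le> ?y" using assms by simp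
  have y1: "?y \<le> 1" using assms N by (simp add: divide_le_eq)
  obtain t where t: "0 \<le> t" "t \<le> 1" "Phi N k t = ?y"
    using IVT'[of "Phi N k" 0 ?y 1] continuous_Phi Phi_at_0[OF assms(1)] Phi_at_1 y0 y1 by auto
  have uniq: "s = t" if "0 \<le> s" "s \<le> 1" "Phi N k s = ?y" for s
  proof (rule ccontr)
    assume "s \<noteq> t"
    then consider "s < t" | "t < s" by linarith
    then show False
    proof cases
      case 1
      have "Phi N k s < Phi N k t" by (rule Phi_strict_mono[OF assms(1) that(1) 1 t(2)])
      then show False using that(3) t(3) by simp
    next
      case 2
      have "Phi N k t < Phi N k s" by (rule Phi_strict_mono[OF assms(1) t(1) 2 that(2)])
      then show False using that(3) t(3) by simp
    qed
  qed
  have th: "(THE t'. 0 \<le> t' \<and> t' \<le> 1 \<and> ?y = Phi N k t') = t"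
  proof (rule the_equality)
    show "0 \<le> t \<and> t \<le> 1 \<and> ?y = Phi N k t" using t by simp
    fix t' assume "0 \<le> t' \<and> t' \<le> 1 \<and> ?y = Phi N k t'"
    then show "t' = t" using uniq[of t'] by simp
  qed
  have "tstar N \<beta> k = t"
    using th assms(1) unfolding tstar_def Phi_def by simp
  then show ?thesis using t by simp
qed

lemma incseq_bound:
  fixes sol :: "'a \<Rightarrow> real"
  assumes "prob_space P" "sol \<in> borel_measurable P" "incseq x"
    "\<And>n. measure P {u\<in>space P. sol u \<le> x n} \<le> t"
  shows "measure P (\<Union>n. {u\<in>space P. sol u \<le> x n}) \<le> t"
proof -
  interpret prob_space P by fact
  let ?A = "\<lambda>n. {u\<in>space P. sol u \<le> x n}"
  have m: "?A n \<in> sets P" for n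
  proof -
    have "sol -` {..x n} \<inter> space P \<in> sets P" by (rule measurable_sets[OF assms(2)]) auto
    moreover have "sol -` {..x n} \<inter> space P = ?A n" by auto
    ultimately show ?thesis by simp
  qed
  have r: "range ?A \<subseteq> sets P" using m by auto
  have i: "incseq ?A"
  proof (rule incseq_SucI)
    fix n
    have "x n \<le> x (Suc n)" using incseq_SucD[OF assms(3)] .
    then show "?A n \<subseteq> ?A (Suc n)" by auto
  qed
  have "(\<lambda>n. measure P (?A n)) \<longlonglongrightarrow> measure P (\<Union>n. ?A n)"
    using finite_Lim_measure_incseq[OF r i] .
  then show ?thesis
    by (rule LIMSEQ_le_const2) (use assms(4) in blast)
qed

lemma level_le:
  fixes sol :: "'a \<Rightarrow> real"
  assumes "prob_space P" "sol \<in> borel_measurable P" "0 \<le> t"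
  shows "measure P {u\<in>space P. measure P {v\<in>space P. sol v \<le> sol u} < t} \<le> t"
proof -
  interpret prob_space P by fact
  define F where "F = (\<lambda>x. measure P {u\<in>space P. sol u \<le> x})"
  have meas: "{u\<in>space P. sol u \<le> x} \<in> sets P" for x
  proof -
    have "sol -` {..x} \<inter> space P \<in> sets P" by (rule measurable_sets[OF assms(2)]) auto
    moreover have "sol -` {..x} \<inter> space P = {u\<in>space P. sol u \<le> x}" by auto
    ultimately show ?thesis by simp
  qed
  have monoF: "F x \<le> F y" if "x \<le> y" for x y
    unfolding F_def by (rule finite_measure_mono) (use that meas in auto)
  define S where "S = {x. F x < t}"
  have down: "x \<in> S" if "y \<in> S" "x \<le> y" for x y
    using that monoF[of x y] unfolding S_def by simp
  define A where "A = {u\<in>space P. F (sol u) < t}"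
  have goal: "measure P A \<le> t"
  proof (cases "S = {}")
    case True
    then have "A = {}" unfolding A_def S_def by blast
    then show ?thesis using assms(3) by simp
  next
    case ne: False
    show ?thesis
    proof (cases "bdd_above S")
      case False
      have Fn: "F (real n) \<le> t" for n
      proof -
        have "\<not> (\<forall>x\<in>S. x \<le> real n)" using False by (auto simp: bdd_above_def)
        then obtain x where "x \<in> S" "\<not> x \<le> real n" by blast
        then have "x \<in> S" "real n \<le> x" by auto
        then show ?thesis using monoF[of "real n" x] unfolding S_def by simp
      qed
      have U: "(\<Union>n. {u\<in>space P. sol u \<le> real n}) = space P"
      proof safe
        fix u assume "u \<in> space P"
        obtain n where "sol u \<le> real n" using real_arch_simple by blast
        then show "u \<in> (\<Union>n. {u\<in>space P. sol u \<le> real n})" using \<open>u \<in> space P\<close> by auto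
      qed
      have "measure P (\<Union>n. {u\<in>space P. sol u \<le> real n}) \<le> t"
      proof (rule incseq_bound[OF assms(1,2)])
        show "incseq (\<lambda>n. real n)" by (simp add: incseq_def)
        show "measure P {u \<in> space P. sol u \<le> real n} \<le> t" for n using Fn[of n] unfolding F_def .
      qed
      then have "1 \<le> t" using U by (simp add: prob_space)
      then show ?thesis using prob_le_1[of A] by linarith
    next
      case bdd: True
      define s where "s = Sup S"
      show ?thesis
      proof (cases "s \<in> S")
        case True
        have "A = {u\<in>space P. sol u \<le> s}"
        proof safe
          fix u assume "u \<in> A"
          then have "sol u \<in> S" unfolding A_def S_def by auto
          then show "sol u \<le> s" unfolding s_def using bdd by (rule cSup_upper)
        next
          fix u assume "u \<in> space P" "sol u \<le> s"
          then have "sol u \<in> S" using down True by blast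
          then show "u \<in> A" using \<open>u \<in> space P\<close> unfolding A_def S_def by simp
        qed (simp add: A_def)
        then have "measure P A = F s" unfolding F_def by simp
        then show ?thesis using True unfolding S_def by simp
      next
        case False
        define x where "x = (\<lambda>n. s - inverse (real (Suc n)))"
        have xS: "x n \<in> S" for n
        proof -
          have "x n < s" unfolding x_def by simp
          then have "\<exists>y\<in>S. x n < y" using less_cSup_iff[OF ne bdd, of "x n"] unfolding s_def by simp
          then obtain y where y: "y \<in> S" "x n < y" by blast
          then have "x n \<le> y" by simp
          then show ?thesis using down[OF y(1)] by blast
        qed
        have "A = (\<Union>n. {u\<in>space P. sol u \<le> x n})"
        proof safe
          fix u assume u: "u \<in> A"
          then have "sol u \<in> S" unfolding A_def S_def by auto
          then have "sol u \<le> s" "sol u \<noteq> s" using False cSup_upper[OF \<open>sol u \<in> S\<close> bdd] unfolding s_def by auto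
          then have "0 < s - sol u" by simp
          then obtain n where "inverse (real (Suc n)) < s - sol u" using reals_Archimedean[of "s - sol u"] by auto
          then have "sol u \<le> x n" unfolding x_def by simp
          then show "u \<in> (\<Union>n. {u\<in>space P. sol u \<le> x n})" using u unfolding A_def by blast
        next
          fix u n assume "u \<in> space P" "sol u \<le> x n"
          then have "sol u \<in> S" using down xS by blast
          then show "u \<in> A" using \<open>u \<in> space P\<close> unfolding A_def S_def by simp
        qed
        moreover have "measure P (\<Union>n. {u\<in>space P. sol u \<le> x n}) \<le> t"
        proof (rule incseq_bound[OF assms(1,2)])
          show "incseq x"
          proof (rule incseq_SucI)
            fix n
            show "x n \<le> x (Suc n)"
              using le_imp_inverse_le[of "real (Suc n)" "real (Suc (Suc n))"] unfolding x_def by simp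
          qed
          show "measure P {u \<in> space P. sol u \<le> x n} \<le> t" for n
            using xS[of n] unfolding S_def F_def by simp
        qed
        ultimately show ?thesis by simp
      qed
    qed
  qed
  then show ?thesis unfolding A_def F_def .
qed

lemma card_as_sum: "real (card {i. i < (n::nat) \<and> Q i}) = (\<Sum>i<n. of_bool (Q i))"
proof (induction n)
  case 0
  show ?case by simp
next
  case (Suc n)
  have fin: "finite {i. i < n \<and> Q i}" by simp
  have "card {i. i < Suc n \<and> Q i} = card {i. i < n \<and> Q i} + (if Q n then 1 else 0)"
  proof (cases "Q n")
    case True
    then have "{i. i < Suc n \<and> Q i} = insert n {i. i < n \<and> Q i}" by (auto simp: less_Suc_eq)
    then show ?thesis using fin True by simp
  next
    case False
    then have "{i. i < Suc n \<and> Q i} = {i. i < n \<and> Q i}" by (auto simp: less_Suc_eq)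
    then show ?thesis using False by simp
  qed
  then show ?case using Suc.IH by simp
qed

lemma cnt_measurable:
  fixes P :: "'a measure" and n k :: nat
  assumes C: "C \<in> sets P"
  shows "{\<omega> \<in> space (PiM {..<n} (\<lambda>_. P)). card {i. i < n \<and> \<omega> i \<in> C} \<le> k} \<in> sets (PiM {..<n} (\<lambda>_. P))"
proof -
  let ?M = "PiM {..<n} (\<lambda>_. P)"
  have f: "(\<lambda>\<omega>. \<Sum>i<n. indicator C (\<omega> i) :: real) \<in> borel_measurable ?M"
  proof (intro borel_measurable_sum)
    fix i assume i: "i \<in> {..<n}"
    have "(\<lambda>\<omega>. \<omega> i) \<in> measurable ?M P" using i by (intro measurable_component_singleton) auto
    moreover have "(indicator C :: 'a \<Rightarrow> real) \<in> borel_measurable P" using C by simp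
    ultimately show "(\<lambda>\<omega>. indicator C (\<omega> i) :: real) \<in> borel_measurable ?M"
      using measurable_comp[of "\<lambda>\<omega>. \<omega> i" ?M P "indicator C" borel] by (simp add: comp_def)
  qed
  have eq: "{\<omega> \<in> space ?M. card {i. i < n \<and> \<omega> i \<in> C} \<le> k} = {\<omega> \<in> space ?M. (\<Sum>i<n. indicator C (\<omega> i) :: real) \<le> real k}"
  proof -
    have "card {i. i < n \<and> \<omega> i \<in> C} \<le> k \<longleftrightarrow> (\<Sum>i<n. indicator C (\<omega> i) :: real) \<le> real k" for \<omega>
    proof -
      have "real (card {i. i < n \<and> \<omega> i \<in> C}) = (\<Sum>i<n. indicator C (\<omega> i) :: real)"
        using card_as_sum[of n "\<lambda>i. \<omega> i \<in> C"] by (simp add: indicator_def)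
      then show ?thesis by (metis of_nat_le_iff)
    qed
    then show ?thesis by auto
  qed
  show ?thesis unfolding eq using f by measurable
qed

lemma card_upd:
  fixes n :: nat
  shows "card {i. i < Suc n \<and> (x(n := y)) i \<in> C} = card {i. i < n \<and> x i \<in> C} + (if y \<in> C then 1 else 0)"
proof -
  have fin: "finite {i. i < n \<and> x i \<in> C}" by simp
  have e: "{i. i < n \<and> (x(n := y)) i \<in> C} = {i. i < n \<and> x i \<in> C}" by auto
  show ?thesis
  proof (cases "y \<in> C")
    case True
    then have "{i. i < Suc n \<and> (x(n := y)) i \<in> C} = insert n {i. i < n \<and> x i \<in> C}"
      by (auto simp: less_Suc_eq)
    then show ?thesis using fin True by simp
  next
    case False
    then have "{i. i < Suc n \<and> (x(n := y)) i \<in> C} = {i. i < n \<and> x i \<in> C}"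
      by (auto simp: less_Suc_eq)
    then show ?thesis using False by simp
  qed
qed

lemma count_bound:
  fixes P :: "'a measure" and C :: "'a set" and n k :: nat
  assumes P: "prob_space P" and C: "C \<in> sets P" and c: "1 - t \<le> measure P C"
    and t0: "0 \<le> t" and t1: "t \<le> 1"
  shows "measure (PiM {..<n} (\<lambda>_. P)) {\<omega> \<in> space (PiM {..<n} (\<lambda>_. P)). card {i. i < n \<and> \<omega> i \<in> C} \<le> k}
           \<le> Phi n k t"
proof (induction n arbitrary: k)
  case 0
  interpret M0: prob_space "PiM {..<0::nat} (\<lambda>_. P)" by (rule prob_space_PiM) (use P in auto)
  show ?case using M0.prob_le_1 by (simp add: Phi_0)
next
  case (Suc n)
  interpret P: prob_space P by (rule P)
  interpret PS: product_sigma_finite "\<lambda>_::nat. P"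
    unfolding product_sigma_finite_def using P.sigma_finite_measure_axioms by simp
  let ?Mn = "PiM {..<n} (\<lambda>_. P)"
  let ?M' = "PiM {..<Suc n} (\<lambda>_. P)"
  interpret Mn: prob_space ?Mn by (rule prob_space_PiM) (use P in auto)
  interpret M': prob_space ?M' by (rule prob_space_PiM) (use P in auto)
  define E where "E = (\<lambda>k. {\<omega> \<in> space ?Mn. card {i. i < n \<and> \<omega> i \<in> C} \<le> k})"
  define E' where "E' = {\<omega> \<in> space ?M'. card {i. i < Suc n \<and> \<omega> i \<in> C} \<le> k}"
  have Emeas: "E j \<in> sets ?Mn" for j unfolding E_def by (rule cnt_measurable[OF C])
  have E'meas: "E' \<in> sets ?M'" unfolding E'_def by (rule cnt_measurable[OF C])
  have IH: "measure ?Mn (E j) \<le> Phi n j t" for j unfolding E_def by (rule Suc.IH)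
  define c where "c = measure P C"
  have compl: "measure P (space P - C) = 1 - c" unfolding c_def using P.prob_compl[OF C] .
  have ins: "{..<Suc n} = insert n {..<n}" by auto
  have "measure ?M' E' = integral\<^sup>L ?M' (indicator E')"
    using E'meas by simp
  also have "\<dots> = (\<integral>x. (\<integral>y. (indicator E' (x(n := y)) :: real) \<partial>P) \<partial>?Mn)"
  proof -
    have "integrable ?M' (indicator E' :: _ \<Rightarrow> real)"
      by (rule integrable_real_indicator[OF E'meas]) (simp add: M'.emeasure_finite less_top[symmetric])
    then have "integrable (PiM (insert n {..<n}) (\<lambda>_. P)) (indicator E' :: _ \<Rightarrow> real)" by (simp only: ins)
    from PS.product_integral_insert[OF finite_lessThan _ this]
    have "integral\<^sup>L (PiM (insert n {..<n}) (\<lambda>_. P)) (indicator E' :: _ \<Rightarrow> real) = (\<integral>x. (\<integral>y. (indicator E' (x(n := y)) :: real) \<partial>P) \<partial>?Mn)"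
      by simp
    then show ?thesis by (simp only: ins)
  qed
  finally have mE': "measure ?M' E' = (\<integral>x. (\<integral>y. (indicator E' (x(n := y)) :: real) \<partial>P) \<partial>?Mn)" .
  have ind: "indicator E' (x(n := y)) = (if card {i. i < n \<and> x i \<in> C} + (if y \<in> C then 1 else 0) \<le> k then 1 else (0::real))"
    if x: "x \<in> space ?Mn" and y: "y \<in> space P" for x y
  proof -
    have "x(n := y) \<in> space ?M'"
      using x y unfolding space_PiM ins by (intro PiE_fun_upd) auto
    then show ?thesis unfolding E'_def indicator_def using card_upd[of n x y C] by simp
  qed
  show ?case
  proof (cases k)
    case 0
    have inner: "(\<integral>y. (indicator E' (x(n := y)) :: real) \<partial>P) = (1 - c) * indicator (E 0) x"
      if x: "x \<in> space ?Mn" for x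
    proof -
      have "(\<integral>y. (indicator E' (x(n := y)) :: real) \<partial>P) = (\<integral>y. indicator (E 0) x * indicator (space P - C) y \<partial>P)"
      proof (rule Bochner_Integration.integral_cong[OF refl])
        fix y assume y: "y \<in> space P"
        show "(indicator E' (x(n := y)) :: real) = indicator (E 0) x * indicator (space P - C) y"
          unfolding ind[OF x y] using x y unfolding E_def 0 indicator_def by auto
      qed
      also have "\<dots> = indicator (E 0) x * (1 - c)"
      proof -
        have "(space P - C) \<inter> space P = space P - C" by auto
        then show ?thesis using compl by simp
      qed
      finally show ?thesis by simp
    qed
    have "measure ?M' E' = (\<integral>x. (1 - c) * indicator (E 0) x \<partial>?Mn)"
      unfolding mE' by (rule Bochner_Integration.integral_cong[OF refl]) (simp add: inner)
    also have "\<dots> = (1 - c) * measure ?Mn (E 0)"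
      using Emeas by simp
    also have "\<dots> \<le> t * Phi n 0 t"
    proof (rule mult_mono)
      show "1 - c \<le> t" using c unfolding c_def by linarith
      show "measure ?Mn (E 0) \<le> Phi n 0 t" by (rule IH)
      show "0 \<le> t" by (rule t0)
      show "0 \<le> measure ?Mn (E 0)" by (rule measure_nonneg)
    qed
    finally show ?thesis unfolding E'_def 0 Phi_Suc_0 .
  next
    case (Suc k')
    have inner: "(\<integral>y. (indicator E' (x(n := y)) :: real) \<partial>P) = c * indicator (E k') x + (1 - c) * indicator (E k) x"
      if x: "x \<in> space ?Mn" for x
    proof -
      have "(\<integral>y. (indicator E' (x(n := y)) :: real) \<partial>P) =
          (\<integral>y. indicator (E k') x * indicator C y + indicator (E k) x * indicator (space P - C) y \<partial>P)"
      proof (rule Bochner_Integration.integral_cong[OF refl])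
        fix y assume y: "y \<in> space P"
        show "(indicator E' (x(n := y)) :: real) = indicator (E k') x * indicator C y + indicator (E k) x * indicator (space P - C) y"
          unfolding ind[OF x y] using x y unfolding E_def Suc indicator_def by auto
      qed
      also have "\<dots> = indicator (E k') x * c + indicator (E k) x * (1 - c)"
      proof -
        have i1: "integrable P (indicator C :: 'a \<Rightarrow> real)"
          by (rule integrable_real_indicator[OF C]) (simp add: P.emeasure_finite less_top[symmetric])
        have i2: "integrable P (indicator (space P - C) :: 'a \<Rightarrow> real)"
          by (rule integrable_real_indicator) (use C in \<open>simp_all add: P.emeasure_finite less_top[symmetric]\<close>)
        have "(\<integral>y. indicator (E k') x * indicator C y + indicator (E k) x * indicator (space P - C) y \<partial>P)
           = (\<integral>y. indicator (E k') x * indicator C y \<partial>P) + (\<integral>y. indicator (E k) x * (indicator (space P - C) y :: real) \<partial>P)"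
          by (rule Bochner_Integration.integral_add) (use i1 i2 in simp_all)
        also have "\<dots> = indicator (E k') x * c + indicator (E k) x * (1 - c)"
        proof -
          have "(space P - C) \<inter> space P = space P - C" by auto
          moreover have "C \<inter> space P = C" using sets.sets_into_space[OF C] by auto
          ultimately show ?thesis using compl unfolding c_def by simp
        qed
        finally show ?thesis .
      qed
      finally show ?thesis by simp
    qed
    have "measure ?M' E' = (\<integral>x. c * indicator (E k') x + (1 - c) * indicator (E k) x \<partial>?Mn)"
      unfolding mE' by (rule Bochner_Integration.integral_cong[OF refl]) (simp add: inner)
    also have "\<dots> = c * measure ?Mn (E k') + (1 - c) * measure ?Mn (E k)"
    proof -
      have i1: "integrable ?Mn (indicator (E j) :: _ \<Rightarrow> real)" for j
        by (rule integrable_real_indicator[OF Emeas]) (simp add: Mn.emeasure_finite less_top[symmetric])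
      have "(\<integral>x. c * indicator (E k') x + (1 - c) * indicator (E k) x \<partial>?Mn)
          = (\<integral>x. c * indicator (E k') x \<partial>?Mn) + (\<integral>x. (1 - c) * indicator (E k) x \<partial>?Mn)"
        by (rule Bochner_Integration.integral_add) (use i1 in simp_all)
      also have "\<dots> = c * measure ?Mn (E k') + (1 - c) * measure ?Mn (E k)"
        using Emeas by simp
      finally show ?thesis .
    qed
    finally have eq: "measure ?M' E' = c * measure ?Mn (E k') + (1 - c) * measure ?Mn (E k)" .
    have sub: "measure ?Mn (E k') \<le> measure ?Mn (E k)"
    proof (rule Mn.finite_measure_mono)
      show "E k' \<subseteq> E k" unfolding E_def Suc by auto
      show "E k \<in> sets ?Mn" by (rule Emeas)
    qed
    let ?m1 = "measure ?Mn (E k')" and ?m2 = "measure ?Mn (E k)"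
    have h1: "(c - (1 - t)) * (?m2 - ?m1) \<ge> 0" using c sub unfolding c_def by simp
    have h2: "(1 - t) * ?m1 \<le> (1 - t) * Phi n k' t" using IH t1 by (simp add: mult_left_mono)
    have h3: "t * ?m2 \<le> t * Phi n k t" using IH t0 by (simp add: mult_left_mono)
    have "measure ?M' E' \<le> (1 - t) * Phi n k' t + t * Phi n k t"
      using eq h1 h2 h3 by (simp add: algebra_simps)
    then show ?thesis unfolding E'_def Suc Phi_Suc_Suc .
  qed
qed

theorem lemma2:
  fixes P :: "'u measure" and sol :: "'u \<Rightarrow> real" and lam \<beta> :: real and N :: nat
  assumes "prob_space P"
    and "sol \<in> borel_measurable P"
    and "N \<ge> 1"
    and "0 < \<beta>" and "\<beta> < 1"
  shows "measure (PiM {..<N} (\<lambda>_. P))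
           {\<omega> \<in> space (PiM {..<N} (\<lambda>_. P)).
              measure P {u \<in> space P. sol u \<le> tau_plus sol lam N \<omega>}
                \<ge> tstar N \<beta> (num_viol sol lam N \<omega>)} \<ge> \<beta>"
proof -
  interpret P: prob_space P by fact
  let ?M = "PiM {..<N} (\<lambda>_. P)"
  interpret M: prob_space ?M by (rule prob_space_PiM) (use assms(1) in auto)
  define F where "F = (\<lambda>x. measure P {u\<in>space P. sol u \<le> x})"
  have meas: "{u\<in>space P. sol u \<le> x} \<in> sets P" for x
  proof -
    have "sol -` {..x} \<inter> space P \<in> sets P" by (rule measurable_sets[OF assms(2)]) auto
    moreover have "sol -` {..x} \<inter> space P = {u\<in>space P. sol u \<le> x}" by auto
    ultimately show ?thesis by simp
  qed
  have monoF: "F x \<le> F y" if "x \<le> y" for x y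
    unfolding F_def by (rule P.finite_measure_mono) (use that meas in auto)
  have F0: "0 \<le> F x" for x unfolding F_def by (rule measure_nonneg)
  have Fmeas: "F \<in> borel_measurable borel"
    by (rule borel_measurable_mono) (use monoF in \<open>simp add: mono_def\<close>)
  have g: "(\<lambda>u. F (sol u)) \<in> borel_measurable P"
    using measurable_comp[OF assms(2) Fmeas] by (simp add: comp_def)
  define tt where "tt = tstar N \<beta>"
  have ttp: "0 \<le> tt k \<and> tt k \<le> 1 \<and> Phi N k (tt k) = (1 - \<beta>) / real N" if "k < N" for k
    unfolding tt_def using tstar_props[OF that assms(4,5)] .
  define B where "B = (\<lambda>k. {u\<in>space P. F (sol u) < tt k})"
  define Cs where "Cs = (\<lambda>k. space P - B k)"
  have Bmeas: "B k \<in> sets P" for k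
  proof -
    have "(\<lambda>u. F (sol u)) -` {..<tt k} \<inter> space P \<in> sets P" by (rule measurable_sets[OF g]) auto
    moreover have "(\<lambda>u. F (sol u)) -` {..<tt k} \<inter> space P = B k" unfolding B_def by auto
    ultimately show ?thesis by simp
  qed
  have Csmeas: "Cs k \<in> sets P" for k unfolding Cs_def using Bmeas by auto
  have PB: "measure P (B k) \<le> tt k" if "k < N" for k
    using level_le[OF assms(1,2), of "tt k"] ttp[OF that] unfolding B_def F_def by simp
  have PC: "1 - tt k \<le> measure P (Cs k)" if "k < N" for k
    using PB[OF that] P.prob_compl[OF Bmeas[of k]] unfolding Cs_def by simp
  define D where "D = (\<lambda>k. {\<omega> \<in> space ?M. card {i. i < N \<and> \<omega> i \<in> Cs k} \<le> k})"
  have Dmeas: "D k \<in> sets ?M" for k unfolding D_def by (rule cnt_measurable[OF Csmeas])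
  have PD: "measure ?M (D k) \<le> (1 - \<beta>) / real N" if "k < N" for k
  proof -
    have "measure ?M (D k) \<le> Phi N k (tt k)"
      unfolding D_def using ttp[OF that] by (intro count_bound[OF assms(1) Csmeas PC[OF that]]) auto
    then show ?thesis using ttp[OF that] by simp
  qed
  define S where "S = (\<lambda>\<omega>. {i. i < N \<and> sol (\<omega> i) \<le> lam})"
  have Sfin: "finite (S \<omega>)" for \<omega> unfolding S_def by simp
  have Ssub: "S \<omega> \<subseteq> {..<N}" for \<omega> unfolding S_def by auto
  have Scard: "card (S \<omega>) \<le> N" for \<omega> using card_mono[OF _ Ssub] by simp
  have nv: "num_viol sol lam N \<omega> = N - card (S \<omega>)" for \<omega>
    unfolding num_viol_def sat_idx_def S_def by simp
  have tp: "tau_plus sol lam N \<omega> = Max ((\<lambda>i. sol (\<omega> i)) ` S \<omega>)" for \<omega>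
    unfolding tau_plus_def sat_idx_def S_def by simp
  define G where "G = {\<omega> \<in> space ?M. measure P {u \<in> space P. sol u \<le> tau_plus sol lam N \<omega>}
                \<ge> tstar N \<beta> (num_viol sol lam N \<omega>)}"
  have Gchar: "G = {\<omega> \<in> space ?M. card (S \<omega>) = 0 \<or> (\<exists>i\<in>{..<N}. sol (\<omega> i) \<le> lam \<and> tt (N - card (S \<omega>)) \<le> F (sol (\<omega> i)))}"
  proof -
    have "tt (N - card (S \<omega>)) \<le> F (tau_plus sol lam N \<omega>) \<longleftrightarrow>
       card (S \<omega>) = 0 \<or> (\<exists>i\<in>{..<N}. sol (\<omega> i) \<le> lam \<and> tt (N - card (S \<omega>)) \<le> F (sol (\<omega> i)))" for \<omega>
    proof (cases "card (S \<omega>) = 0")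
      case True
      then have "tt (N - card (S \<omega>)) = 0" unfolding tt_def tstar_def by simp
      then show ?thesis using True F0 by simp
    next
      case False
      then have ne: "S \<omega> \<noteq> {}" by auto
      have le: "sol (\<omega> i) \<le> tau_plus sol lam N \<omega>" if "i \<in> S \<omega>" for i
        unfolding tp using that Sfin by (intro Max_ge) auto
      have "tau_plus sol lam N \<omega> \<in> (\<lambda>i. sol (\<omega> i)) ` S \<omega>"
        unfolding tp using Sfin ne by (intro Max_in) auto
      then obtain i0 where i0: "i0 \<in> S \<omega>" "tau_plus sol lam N \<omega> = sol (\<omega> i0)" by auto
      show ?thesis
      proof
        assume "tt (N - card (S \<omega>)) \<le> F (tau_plus sol lam N \<omega>)"
        then show "card (S \<omega>) = 0 \<or> (\<exists>i\<in>{..<N}. sol (\<omega> i) \<le> lam \<and> tt (N - card (S \<omega>)) \<le> F (sol (\<omega> i)))"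
          using i0 unfolding S_def by auto
      next
        assume "card (S \<omega>) = 0 \<or> (\<exists>i\<in>{..<N}. sol (\<omega> i) \<le> lam \<and> tt (N - card (S \<omega>)) \<le> F (sol (\<omega> i)))"
        then obtain i where i: "i \<in> S \<omega>" "tt (N - card (S \<omega>)) \<le> F (sol (\<omega> i))"
          using False unfolding S_def by auto
        show "tt (N - card (S \<omega>)) \<le> F (tau_plus sol lam N \<omega>)"
          using i(2) monoF[OF le[OF i(1)]] by linarith
      qed
    qed
    then show ?thesis unfolding G_def F_def tt_def nv by auto
  qed
  define L where "L = {u\<in>space P. sol u \<le> lam}"
  have Lmeas: "L \<in> sets P" unfolding L_def by (rule meas)
  have SL: "S \<omega> = {i. i < N \<and> \<omega> i \<in> L}" if "\<omega> \<in> space ?M" for \<omega>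
  proof -
    have "\<omega> i \<in> space P" if "i < N" for i using \<open>\<omega> \<in> space ?M\<close> that unfolding space_PiM by auto
    then show ?thesis unfolding S_def L_def by auto
  qed
  have Gmeas: "G \<in> sets ?M"
  proof -
    define H where "H = (\<lambda>j. {u\<in>space P. sol u \<le> lam \<and> tt (N - j) \<le> F (sol u)})"
    have Hmeas: "H j \<in> sets P" for j
    proof -
      have X: "(\<lambda>u. F (sol u)) -` {tt (N - j)..} \<inter> space P \<in> sets P" by (rule measurable_sets[OF g]) auto
      have eq: "(\<lambda>u. F (sol u)) -` {tt (N - j)..} \<inter> space P \<inter> L = H j" unfolding H_def L_def by auto
      have "(\<lambda>u. F (sol u)) -` {tt (N - j)..} \<inter> space P \<inter> L \<in> sets P" by (rule sets.Int[OF X Lmeas])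
      then show ?thesis by (subst eq[symmetric])
    qed
    have cle: "{\<omega> \<in> space ?M. card {i. i < N \<and> \<omega> i \<in> L} \<le> j} \<in> sets ?M" for j
      by (rule cnt_measurable[OF Lmeas])
    have ceq: "{\<omega> \<in> space ?M. card {i. i < N \<and> \<omega> i \<in> L} = j} \<in> sets ?M" for j
    proof (cases j)
      case 0
      have e0: "{\<omega> \<in> space ?M. card {i. i < N \<and> \<omega> i \<in> L} = j} = {\<omega> \<in> space ?M. card {i. i < N \<and> \<omega> i \<in> L} \<le> 0}"
        unfolding 0 by (simp only: le_zero_eq)
      show ?thesis unfolding e0 by (rule cle)
    next
      case (Suc j')
      have eS: "{\<omega> \<in> space ?M. card {i. i < N \<and> \<omega> i \<in> L} = j} =
        {\<omega> \<in> space ?M. card {i. i < N \<and> \<omega> i \<in> L} \<le> Suc j'} - {\<omega> \<in> space ?M. card {i. i < N \<and> \<omega> i \<in> L} \<le> j'}"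
        unfolding Suc by (rule set_eqI) (simp add: le_Suc_eq, linarith)
      show ?thesis unfolding eS by (rule sets.Diff[OF cle cle])
    qed
    have comp: "{\<omega> \<in> space ?M. \<omega> i \<in> H j} \<in> sets ?M" if "i < N" for i j
    proof -
      have mc: "(\<lambda>\<omega>. \<omega> i) \<in> measurable ?M P" using that by (intro measurable_component_singleton) auto
      have m: "(\<lambda>\<omega>. \<omega> i) -` H j \<inter> space ?M \<in> sets ?M" by (rule measurable_sets[OF mc Hmeas[of j]])
      have eq: "(\<lambda>\<omega>. \<omega> i) -` H j \<inter> space ?M = {\<omega> \<in> space ?M. \<omega> i \<in> H j}" by blast
      show ?thesis using m by (subst eq[symmetric])
    qed
    have ex: "{\<omega> \<in> space ?M. \<exists>i\<in>{..<N}. \<omega> i \<in> H j} \<in> sets ?M" for j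
      by (rule sets.sets_Collect_finite_Ex) (use comp in auto)
    define R where "R = (\<lambda>\<omega> j. j = 0 \<or> (\<exists>i\<in>{..<N}. \<omega> i \<in> H j))"
    have G2: "G = {\<omega> \<in> space ?M. \<exists>j\<in>{..N}. card {i. i < N \<and> \<omega> i \<in> L} = j \<and> R \<omega> j}"
    proof -
      have "(card (S \<omega>) = 0 \<or> (\<exists>i\<in>{..<N}. sol (\<omega> i) \<le> lam \<and> tt (N - card (S \<omega>)) \<le> F (sol (\<omega> i))))
        \<longleftrightarrow> (\<exists>j\<in>{..N}. card {i. i < N \<and> \<omega> i \<in> L} = j \<and> R \<omega> j)"
        if w: "\<omega> \<in> space ?M" for \<omega>
      proof -
        have sp: "\<omega> i \<in> space P" if "i < N" for i using w that unfolding space_PiM by auto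
        have cS: "card {i. i < N \<and> \<omega> i \<in> L} = card (S \<omega>)" using SL[OF w] by simp
        have e1: "(\<exists>j\<in>{..N}. card {i. i < N \<and> \<omega> i \<in> L} = j \<and> R \<omega> j) \<longleftrightarrow> R \<omega> (card (S \<omega>))"
          unfolding cS using Scard[of \<omega>] by blast
        have e2: "(\<omega> i \<in> H (card (S \<omega>))) \<longleftrightarrow> sol (\<omega> i) \<le> lam \<and> tt (N - card (S \<omega>)) \<le> F (sol (\<omega> i))"
          if "i < N" for i
          unfolding H_def using sp[OF that] by simp
        have e3: "R \<omega> (card (S \<omega>)) \<longleftrightarrow> (card (S \<omega>) = 0 \<or> (\<exists>i\<in>{..<N}. sol (\<omega> i) \<le> lam \<and> tt (N - card (S \<omega>)) \<le> F (sol (\<omega> i))))"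
          unfolding R_def using e2 by (meson lessThan_iff)
        show ?thesis using e1 e3 by simp
      qed
      then show ?thesis unfolding Gchar by (intro Collect_cong conj_cong refl) simp_all
    qed
    show ?thesis unfolding G2
    proof (rule sets.sets_Collect_finite_Ex)
      fix j assume "j \<in> {..N}"
      have A2: "{\<omega> \<in> space ?M. R \<omega> j} \<in> sets ?M"
      proof (cases "j = 0")
        case True
        then have eR: "{\<omega> \<in> space ?M. R \<omega> j} = space ?M" unfolding R_def by simp
        show ?thesis unfolding eR by (rule sets.top)
      next
        case False
        then have eR: "{\<omega> \<in> space ?M. R \<omega> j} = {\<omega> \<in> space ?M. \<exists>i\<in>{..<N}. \<omega> i \<in> H j}" unfolding R_def by simp
        show ?thesis unfolding eR by (rule ex)
      qed
      have eI: "{\<omega> \<in> space ?M. card {i. i < N \<and> \<omega> i \<in> L} = j \<and> R \<omega> j} =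
          {\<omega> \<in> space ?M. card {i. i < N \<and> \<omega> i \<in> L} = j} \<inter> {\<omega> \<in> space ?M. R \<omega> j}" by blast
      show "{\<omega> \<in> space ?M. card {i. i < N \<and> \<omega> i \<in> L} = j \<and> R \<omega> j} \<in> sets ?M"
        unfolding eI by (rule sets.Int[OF ceq A2])
    qed simp
  qed
  have incl: "space ?M - (\<Union>k\<in>{..<N}. D k) \<subseteq> G"
  proof
    fix \<omega> assume w: "\<omega> \<in> space ?M - (\<Union>k\<in>{..<N}. D k)"
    then have wM: "\<omega> \<in> space ?M" and nD: "\<And>k. k < N \<Longrightarrow> \<omega> \<notin> D k" by auto
    have sp: "\<omega> i \<in> space P" if "i < N" for i using wM that unfolding space_PiM by auto
    have "card (S \<omega>) = 0 \<or> (\<exists>i\<in>{..<N}. sol (\<omega> i) \<le> lam \<and> tt (N - card (S \<omega>)) \<le> F (sol (\<omega> i)))"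
    proof (rule ccontr)
      assume "\<not> ?thesis"
      then have c0: "card (S \<omega>) \<noteq> 0" and
        small: "\<And>i. i < N \<Longrightarrow> sol (\<omega> i) \<le> lam \<Longrightarrow> F (sol (\<omega> i)) < tt (N - card (S \<omega>))" by auto
      define k where "k = N - card (S \<omega>)"
      have kN: "k < N" unfolding k_def using c0 Scard[of \<omega>] by simp
      have sub: "{i. i < N \<and> \<omega> i \<in> Cs k} \<subseteq> {..<N} - S \<omega>"
        using small sp unfolding Cs_def B_def S_def k_def by auto
      have "card {i. i < N \<and> \<omega> i \<in> Cs k} \<le> card ({..<N} - S \<omega>)"
        by (rule card_mono) (use sub in auto)
      also have "\<dots> = N - card (S \<omega>)" using Ssub Sfin by (simp add: card_Diff_subset)
      finally have "\<omega> \<in> D k" unfolding D_def k_def using wM by simp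
      then show False using nD[OF kN] by simp
    qed
    then show "\<omega> \<in> G" unfolding Gchar using wM by simp
  qed
  have Umeas: "(\<Union>k\<in>{..<N}. D k) \<in> sets ?M" using Dmeas by auto
  have "measure ?M (\<Union>k\<in>{..<N}. D k) \<le> (\<Sum>k\<in>{..<N}. measure ?M (D k))"
    by (rule M.finite_measure_subadditive_finite) (use Dmeas in auto)
  also have "\<dots> \<le> real (card {..<N}) * ((1 - \<beta>) / real N)"
    by (rule sum_bounded_above) (use PD in auto)
  also have "\<dots> = 1 - \<beta>" using assms(3) by simp
  finally have U: "measure ?M (\<Union>k\<in>{..<N}. D k) \<le> 1 - \<beta>" .
  have "\<beta> \<le> measure ?M (space ?M - (\<Union>k\<in>{..<N}. D k))"
    using M.prob_compl[OF Umeas] U by simp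
  also have "\<dots> \<le> measure ?M G"
    by (rule M.finite_measure_mono[OF incl Gmeas])
  finally show ?thesis unfolding G_def .
qed

end
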